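(* Let $p\neq 0$ be a real number and let $N=\begin{pmatrix} n_{00} & n_{01}\\ n_{10} & n_{11}\end{pmatrix}\in SL(2,\mathbb{Z})$ have eigenvalues $e^{p}$ and $e^{-p}$. Let $(x_0,x_1)$ be an eigenvector of $N$ for the eigenvalue $e^{p}$ and $(y_0,y_1)$ an eigenvector for $e^{-p}$, and put $z_2=x_1y_0-x_0y_1$. Then there is a co-compact discrete subgroup $\Gamma(p)$ of $G(p)$ of the form $$\Gamma(p)=(\Gamma_N\rtimes_{\psi}\mathbb{Z})\rtimes_{\phi} z_2\mathbb{Z},$$ where $\Gamma_N$ is a co-compact discrete subgroup of $H(1,1)$ such that (1) $\Gamma_N$ is invariant under $\psi(m)$ for every $m\in\mathbb{Z}$, and (2) $\Gamma_S=\Gamma_N\rtimes_\psi\mathbb{Z}$ is a co-compact discrete subgroup of $S=H(1,1)\rtimes_\psi\mathbb{R}$ which is invariant under $\phi(t)$ for every $t\in z_2\mathbb{Z}$.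
   Context: $H(1,1)$ is the $3$-dimensional Heisenberg group of real upper triangular unipotent $3\times 3$ matrices $\begin{pmatrix}1&x&z\\0&1&y\\0&0&1\end{pmatrix}$, identified with $\mathbb{R}^3$ with coordinates $(x,y,z)$, so $(x,y,z)(x',y',z')=(x+x',y+y',z+z'+xy')$. For $u\in\mathbb{R}$, $\psi(u)\in\mathrm{Aut}(H(1,1))$ is $\psi(u)(x,y,z)=(e^{pu}x,e^{-pu}y,z)$, and $S=H(1,1)\rtimes_\psi\mathbb{R}$ is $\mathbb{R}^4$ with coordinates $(x,y,z,u)$ and product $(x,y,z,u)(x',y',z',u')=(x+e^{pu}x',\,y+e^{-pu}y',\,z+z'+xe^{-pu}y',\,u+u')$. For $t\in\mathbb{R}$, $\phi(t)\in\mathrm{Aut}(S)$ is $\phi(t)(x,y,z,u)=(x,y,z+tu,u)$, and $G(p)=S\rtimes_\phi\mathbb{R}$ is $\mathbb{R}^5$ with coordinates $(x,y,z,u,t)$ and product $(x,y,z,u,t)(x',y',z',u',t')=(x+e^{pu}x',\,y+e^{-pu}y',\,z+z'+xe^{-pu}y'+tu',\,u+u',\,t+t')$. For a subgroup $\Gamma_N\subset H(1,1)$ invariant under $\psi(\mathbb{Z})$, $\Gamma_N\rtimes_\psi\mathbb{Z}$ denotes the subgroup $\{(h,u):h\in\Gamma_N,u\in\mathbb{Z}\}$ of $S$; similarly $\Gamma_S\rtimes_\phi z_2\mathbb{Z}=\{(s,t): s\in\Gamma_S,\ t\in z_2\mathbb{Z}\}\subset G(p)$. *)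

theory Defs
  imports "HOL-Analysis.Analysis" "HOL-Algebra.Group" "HOL-Algebra.Coset"
begin

definition heis_mult :: "real \<times> real \<times> real \<Rightarrow> real \<times> real \<times> real \<Rightarrow> real \<times> real \<times> real" where
  "heis_mult a b = (case a of (x,y,z) \<Rightarrow> case b of (x',y',z') \<Rightarrow> (x+x', y+y', z+z'+x*y'))"

definition Heis :: "(real \<times> real \<times> real) monoid" where
  "Heis = \<lparr>carrier = UNIV, mult = heis_mult, one = (0,0,0)\<rparr>"

definition psi :: "real \<Rightarrow> real \<Rightarrow> real \<times> real \<times> real \<Rightarrow> real \<times> real \<times> real" where
  "psi p u h = (case h of (x,y,z) \<Rightarrow> (exp (p*u) * x, exp (-(p*u)) * y, z))"

text \<open>S = H(1,1) \<rtimes>_psi R\<close>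
definition S_mult :: "real \<Rightarrow> real \<times> real \<times> real \<times> real \<Rightarrow> real \<times> real \<times> real \<times> real \<Rightarrow> real \<times> real \<times> real \<times> real" where
  "S_mult p a b = (case a of (x,y,z,u) \<Rightarrow> case b of (x',y',z',u') \<Rightarrow>
     (x + exp (p*u) * x', y + exp (-(p*u)) * y', z + z' + x * exp (-(p*u)) * y', u + u'))"

definition S_grp :: "real \<Rightarrow> (real \<times> real \<times> real \<times> real) monoid" where
  "S_grp p = \<lparr>carrier = UNIV, mult = S_mult p, one = (0,0,0,0)\<rparr>"

definition phi :: "real \<Rightarrow> real \<times> real \<times> real \<times> real \<Rightarrow> real \<times> real \<times> real \<times> real" where
  "phi t s = (case s of (x,y,z,u) \<Rightarrow> (x, y, z + t*u, u))"

text \<open>G(p) = S \<rtimes>_phi R\<close>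
definition G_mult :: "real \<Rightarrow> real \<times> real \<times> real \<times> real \<times> real \<Rightarrow> real \<times> real \<times> real \<times> real \<times> real \<Rightarrow> real \<times> real \<times> real \<times> real \<times> real" where
  "G_mult p a b = (case a of (x,y,z,u,t) \<Rightarrow> case b of (x',y',z',u',t') \<Rightarrow>
     (x + exp (p*u) * x', y + exp (-(p*u)) * y', z + z' + x * exp (-(p*u)) * y' + t * u', u + u', t + t'))"

definition G_grp :: "real \<Rightarrow> (real \<times> real \<times> real \<times> real \<times> real) monoid" where
  "G_grp p = \<lparr>carrier = UNIV, mult = G_mult p, one = (0,0,0,0,0)\<rparr>"

text \<open>Gamma_N \<rtimes>_psi Z and Gamma_S \<rtimes>_phi c Z as subsets.\<close>
definition semidir_Z :: "(real \<times> real \<times> real) set \<Rightarrow> (real \<times> real \<times> real \<times> real) set" where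
  "semidir_Z \<Gamma> = {(x,y,z,u). (x,y,z) \<in> \<Gamma> \<and> u \<in> \<int>}"

definition semidir_cZ :: "real \<Rightarrow> (real \<times> real \<times> real \<times> real) set \<Rightarrow> (real \<times> real \<times> real \<times> real \<times> real) set" where
  "semidir_cZ c \<Gamma> = {(x,y,z,u,t). (x,y,z,u) \<in> \<Gamma> \<and> (\<exists>k::int. t = c * of_int k)}"

definition cocompact_discrete_subgroup :: "('a::topological_space) monoid \<Rightarrow> 'a set \<Rightarrow> bool" where
  "cocompact_discrete_subgroup G \<Gamma> \<longleftrightarrow>
     subgroup \<Gamma> G \<and> discrete \<Gamma> \<and>
     (\<exists>Y :: 'a set topology. quotient_map (top_of_set (carrier G)) Y (\<lambda>g. g <#\<^bsub>G\<^esub> \<Gamma>) \<and> compact_space Y)"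

end

theory Submission
  imports Defs
begin


lemma Heis_group: "group Heis"
proof (rule groupI)
  fix a b c assume "a \<in> carrier Heis" "b \<in> carrier Heis" "c \<in> carrier Heis"
  show "a \<otimes>\<^bsub>Heis\<^esub> b \<otimes>\<^bsub>Heis\<^esub> c = a \<otimes>\<^bsub>Heis\<^esub> (b \<otimes>\<^bsub>Heis\<^esub> c)"
    by (cases a; cases b; cases c) (simp add: Heis_def heis_mult_def algebra_simps)
next
  fix x assume "x \<in> carrier Heis"
  obtain a b c where x: "x = (a,b,c)" by (cases x) auto
  show "\<exists>y\<in>carrier Heis. y \<otimes>\<^bsub>Heis\<^esub> x = \<one>\<^bsub>Heis\<^esub>"
    by (rule bexI[of _ "(-a, -b, a*b - c)"]) (simp_all add: x Heis_def heis_mult_def)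
qed (auto simp: Heis_def heis_mult_def)

lemma Heis_inv: "inv\<^bsub>Heis\<^esub> (x,y,z) = (-x,-y,x*y-z)"
  by (rule group.inv_equality[OF Heis_group]) (simp_all add: Heis_def heis_mult_def)

lemma exp_lem1: fixes p u w :: real shows "exp (p*(u+w)) = exp (p*u) * exp (p*w)"
  by (simp add: distrib_left exp_add)
lemma exp_lem2: fixes p u w :: real shows "exp (-(p*(u+w))) = exp (-(p*u)) * exp (-(p*w))"
  by (simp add: distrib_left exp_add[symmetric])
lemma exp_lem3: fixes p u w :: real shows "exp (p*u) * exp (-(p*u)) = 1"
  by (simp add: exp_minus field_simps)
lemma exp_lem3': fixes p u w :: real shows "exp (-(p*u)) * exp (p*u) = 1"
  by (simp add: exp_minus field_simps)

lemma S_group: "group (S_grp p)"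
proof (rule groupI)
  fix a b c assume "a \<in> carrier (S_grp p)" "b \<in> carrier (S_grp p)" "c \<in> carrier (S_grp p)"
  obtain x y z u where a: "a = (x,y,z,u)" by (cases a) auto
  obtain x' y' z' u' where b: "b = (x',y',z',u')" by (cases b) auto
  obtain x'' y'' z'' u'' where c: "c = (x'',y'',z'',u'')" by (cases c) auto
  have e: "exp (p*u) * exp (-(p*u)) = 1" by (rule exp_lem3)
  show "a \<otimes>\<^bsub>S_grp p\<^esub> b \<otimes>\<^bsub>S_grp p\<^esub> c = a \<otimes>\<^bsub>S_grp p\<^esub> (b \<otimes>\<^bsub>S_grp p\<^esub> c)"
    unfolding a b c S_grp_def S_mult_def
    apply (simp add: exp_lem1 exp_lem2)
    apply (simp add: algebra_simps)
    apply (metis (no_types, opaque_lifting) e mult.assoc mult.commute mult.right_neutral)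
    done
next
  fix x assume "x \<in> carrier (S_grp p)"
  obtain a b c u where x: "x = (a,b,c,u)" by (cases x) auto
  have e: "exp (-(p*u)) * exp (p*u) = 1" by (rule exp_lem3')
  show "\<exists>y\<in>carrier (S_grp p). y \<otimes>\<^bsub>S_grp p\<^esub> x = \<one>\<^bsub>S_grp p\<^esub>"
    apply (rule bexI[of _ "(-exp(-(p*u))*a, -exp(p*u)*b, a*b - c, -u)"])
    apply (simp_all add: x S_grp_def S_mult_def)
    using e by (metis mult.assoc mult.commute mult.left_neutral)
qed (auto simp: S_grp_def S_mult_def)

lemma S_inv: "inv\<^bsub>S_grp p\<^esub> (x,y,z,u) = (-exp(-(p*u))*x, -exp(p*u)*y, x*y - z, -u)"
proof (rule group.inv_equality[OF S_group])
  have e: "exp (-(p*u)) * exp (p*u) = 1" by (rule exp_lem3')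
  show "(- exp (- (p * u)) * x, - exp (p * u) * y, x * y - z, - u) \<otimes>\<^bsub>S_grp p\<^esub> (x, y, z, u) = \<one>\<^bsub>S_grp p\<^esub>"
    apply (simp add: S_grp_def S_mult_def)
    using e by (metis mult.assoc mult.commute mult.left_neutral)
qed (auto simp: S_grp_def)

lemma G_group: "group (G_grp p)"
proof (rule groupI)
  fix a b c assume "a \<in> carrier (G_grp p)" "b \<in> carrier (G_grp p)" "c \<in> carrier (G_grp p)"
  obtain x y z u t where a: "a = (x,y,z,u,t)" by (cases a) auto
  obtain x' y' z' u' t' where b: "b = (x',y',z',u',t')" by (cases b) auto
  obtain x'' y'' z'' u'' t'' where c: "c = (x'',y'',z'',u'',t'')" by (cases c) auto
  have e: "exp (p*u) * exp (-(p*u)) = 1" by (rule exp_lem3)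
  show "a \<otimes>\<^bsub>G_grp p\<^esub> b \<otimes>\<^bsub>G_grp p\<^esub> c = a \<otimes>\<^bsub>G_grp p\<^esub> (b \<otimes>\<^bsub>G_grp p\<^esub> c)"
    unfolding a b c G_grp_def G_mult_def
    apply (simp add: exp_lem1 exp_lem2)
    apply (simp add: algebra_simps)
    apply (metis (no_types, opaque_lifting) e mult.assoc mult.commute mult.right_neutral)
    done
next
  fix x assume "x \<in> carrier (G_grp p)"
  obtain a b c u t where x: "x = (a,b,c,u,t)" by (cases x) auto
  have e: "exp (-(p*u)) * exp (p*u) = 1" by (rule exp_lem3')
  show "\<exists>y\<in>carrier (G_grp p). y \<otimes>\<^bsub>G_grp p\<^esub> x = \<one>\<^bsub>G_grp p\<^esub>"
    apply (rule bexI[of _ "(-exp(-(p*u))*a, -exp(p*u)*b, a*b - c + t*u, -u, -t)"])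
    apply (simp_all add: x G_grp_def G_mult_def)
    using e by (metis mult.assoc mult.commute mult.left_neutral)
qed (auto simp: G_grp_def G_mult_def)

lemma G_inv: "inv\<^bsub>G_grp p\<^esub> (x,y,z,u,t) = (-exp(-(p*u))*x, -exp(p*u)*y, x*y - z + t*u, -u, -t)"
proof (rule group.inv_equality[OF G_group])
  have e: "exp (-(p*u)) * exp (p*u) = 1" by (rule exp_lem3')
  show "(-exp(-(p*u))*x, -exp(p*u)*y, x*y - z + t*u, -u, -t) \<otimes>\<^bsub>G_grp p\<^esub> (x, y, z, u, t) = \<one>\<^bsub>G_grp p\<^esub>"
    apply (simp add: G_grp_def G_mult_def)
    using e by (metis mult.assoc mult.commute mult.left_neutral)
qed (auto simp: G_grp_def)



lemma quotient_topology_exists: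
  "\<exists>Y. quotient_map X Y f"
proof -
  define L where "L = (\<lambda>U. U \<subseteq> f ` topspace X \<and> openin X {x \<in> topspace X. f x \<in> U})"
  have ist: "istopology L"
  proof -
    have 1: "L (S \<inter> T)" if "L S" "L T" for S T
    proof -
      have "{x \<in> topspace X. f x \<in> S \<inter> T} = {x \<in> topspace X. f x \<in> S} \<inter> {x \<in> topspace X. f x \<in> T}" by auto
      then show ?thesis using that unfolding L_def by auto
    qed
    have 2: "L (\<Union>K)" if "\<forall>k\<in>K. L k" for K
    proof -
      have "{x \<in> topspace X. f x \<in> \<Union>K} = \<Union>((\<lambda>k. {x \<in> topspace X. f x \<in> k}) ` K)" by auto
      then show ?thesis using that unfolding L_def by auto
    qed
    show ?thesis unfolding istopology_def using 1 2 by blast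
  qed
  have top: "topspace (topology L) = f ` topspace X"
  proof -
    have "{x \<in> topspace X. f x \<in> f ` topspace X} = topspace X" by auto
    then have "L (f ` topspace X)" unfolding L_def by auto
    then have "f ` topspace X \<subseteq> topspace (topology L)"
      using ist by (metis openin_subset topology_inverse')
    moreover have "topspace (topology L) = \<Union>{U. L U}" using ist by (simp add: topspace_def)
    then have "topspace (topology L) \<subseteq> f ` topspace X"
      unfolding L_def by auto
    ultimately show ?thesis by blast
  qed
  show ?thesis
    apply (rule exI[of _ "topology L"])
    unfolding quotient_map_def top using ist L_def by auto
qed

lemma cocompact_from_domain:
  fixes G :: "('a::topological_space) monoid"
  assumes grp: "group G" and car: "carrier G = UNIV" and sg: "subgroup \<Gamma> G"
    and disc: "discrete \<Gamma>" and K: "compact K"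
    and dec: "\<And>g. \<exists>k\<in>K. \<exists>h\<in>\<Gamma>. g = k \<otimes>\<^bsub>G\<^esub> h"
  shows "cocompact_discrete_subgroup G \<Gamma>"
proof -
  define f where "f = (\<lambda>g. g <#\<^bsub>G\<^esub> \<Gamma>)"
  obtain Y where q: "quotient_map (top_of_set (carrier G)) Y f"
    using quotient_topology_exists by blast
  have ts: "topspace Y = f ` UNIV"
    using quotient_imp_surjective_map[OF q] car by simp
  have "f g \<in> f ` K" for g
  proof -
    obtain k h where kh: "k \<in> K" "h \<in> \<Gamma>" "g = k \<otimes>\<^bsub>G\<^esub> h" using dec by blast
    have "f g = k <#\<^bsub>G\<^esub> (h <#\<^bsub>G\<^esub> \<Gamma>)"
      unfolding f_def kh(3) using group.lcos_m_assoc[OF grp, of \<Gamma> k h] car subgroup.subset[OF sg]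
      by auto
    also have "h <#\<^bsub>G\<^esub> \<Gamma> = \<Gamma>"
      using group.coset_join3[OF grp, of h \<Gamma>] car sg kh by auto
    finally show ?thesis using kh unfolding f_def by auto
  qed
  then have ts2: "topspace Y = f ` K" using ts by auto
  have "compactin (top_of_set (carrier G)) K" using K car by simp
  then have "compactin Y (f ` K)"
    using image_compactin quotient_imp_continuous_map[OF q] by blast
  then have "compact_space Y" using ts2 by (simp add: compact_space_def)
  then show ?thesis unfolding cocompact_discrete_subgroup_def f_def using q sg disc
    unfolding f_def by blast
qed



locale lat =
  fixes p :: real and n00 n01 n10 n11 :: int and x0 x1 y0 y1 z2 :: real
  assumes p0: "p \<noteq> 0" and det: "n00 * n11 - n01 * n10 = 1" and xnz: "(x0, x1) \<noteq> (0, 0)"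
    and ex0: "of_int n00 * x0 + of_int n01 * x1 = exp p * x0"
    and ex1: "of_int n10 * x0 + of_int n11 * x1 = exp p * x1"
    and ynz: "(y0, y1) \<noteq> (0, 0)"
    and ey0: "of_int n00 * y0 + of_int n01 * y1 = exp (-p) * y0"
    and ey1: "of_int n10 * y0 + of_int n11 * y1 = exp (-p) * y1"
    and z2: "z2 = x1 * y0 - x0 * y1"
begin

lemma eig_ne: "exp p \<noteq> exp (-p)"
  using p0 by simp

lemma z2nz: "z2 \<noteq> 0"
proof
  assume "z2 = 0"
  then have c: "x1 * y0 = x0 * y1" using z2 by simp
  show False
  proof (cases "x0 = 0")
    case True
    then have x1: "x1 \<noteq> 0" using xnz by auto
    then have "y0 = 0" using c True by simp
    then have y1: "y1 \<noteq> 0" using ynz by auto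
    have "of_int n11 = exp p" using ex1 True x1 by simp
    moreover have "of_int n11 = exp (-p)" using ey1 \<open>y0 = 0\<close> y1 by simp
    ultimately show False using eig_ne by simp
  next
    case False
    have yy: "y1 = x1 * y0 / x0" using c False by (simp add: field_simps)
    have "of_int n00 * y0 + of_int n01 * (x1 * y0 / x0) = exp (-p) * y0" using ey0 yy by simp
    then have "y0 * (of_int n00 * x0 + of_int n01 * x1) = exp (-p) * y0 * x0"
      using False by (simp add: field_simps)
    then have "y0 * (exp p * x0) = exp (-p) * y0 * x0" using ex0 by simp
    then have "y0 * x0 * (exp p - exp (-p)) = 0" by (simp add: algebra_simps)
    then have "y0 = 0" using False eig_ne by simp
    then have "y1 = 0" using yy by simp
    then show False using ynz \<open>y0 = 0\<close> by simp
  qed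
qed

definition GN :: "(real \<times> real \<times> real) set" where
  "GN = {(a*x0+b*x1, a*y0+b*y1, (a*x0+b*x1)*(a*y0+b*y1)/2 + z2/2*j) | a b j. a \<in> \<int> \<and> b \<in> \<int> \<and> j \<in> \<int>}"

lemma GN_I: "a \<in> \<int> \<Longrightarrow> b \<in> \<int> \<Longrightarrow> j \<in> \<int> \<Longrightarrow> X = a*x0+b*x1 \<Longrightarrow> Y = a*y0+b*y1 \<Longrightarrow>
   Z = X*Y/2 + z2/2*j \<Longrightarrow> (X,Y,Z) \<in> GN"
  unfolding GN_def by blast

lemma GN_E: assumes "P \<in> GN"
  obtains a b j where "a \<in> \<int>" "b \<in> \<int>" "j \<in> \<int>"
    "P = (a*x0+b*x1, a*y0+b*y1, (a*x0+b*x1)*(a*y0+b*y1)/2 + z2/2*j)"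
  using assms unfolding GN_def by blast

lemma GN_sub: "subgroup GN Heis"
proof (rule group.subgroupI[OF Heis_group])
  show "GN \<subseteq> carrier Heis" by (simp add: Heis_def)
  show "GN \<noteq> {}" using GN_I[of 0 0 0] by auto
next
  fix P assume "P \<in> GN"
  then obtain a b j where ab: "a \<in> \<int>" "b \<in> \<int>" "j \<in> \<int>"
    "P = (a*x0+b*x1, a*y0+b*y1, (a*x0+b*x1)*(a*y0+b*y1)/2 + z2/2*j)" by (rule GN_E)
  show "inv\<^bsub>Heis\<^esub> P \<in> GN"
    unfolding ab(4) Heis_inv
    by (rule GN_I[of "-a" "-b" "-j"]) (use ab in \<open>auto simp: algebra_simps\<close>)
next
  fix P Q assume "P \<in> GN" "Q \<in> GN"
  then obtain a b j a' b' j' where ab: "a \<in> \<int>" "b \<in> \<int>" "j \<in> \<int>"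
    "P = (a*x0+b*x1, a*y0+b*y1, (a*x0+b*x1)*(a*y0+b*y1)/2 + z2/2*j)"
    and ab': "a' \<in> \<int>" "b' \<in> \<int>" "j' \<in> \<int>"
    "Q = (a'*x0+b'*x1, a'*y0+b'*y1, (a'*x0+b'*x1)*(a'*y0+b'*y1)/2 + z2/2*j')"
    by (metis GN_E)
  show "P \<otimes>\<^bsub>Heis\<^esub> Q \<in> GN"
    unfolding ab(4) ab'(4) Heis_def
    apply (simp add: heis_mult_def)
    apply (rule GN_I[of "a+a'" "b+b'" "j + j' + a'*b - a*b'"])
    using ab ab' by (auto simp: field_simps z2)
qed

lemma detr: "real_of_int n00 * of_int n11 - of_int n01 * of_int n10 = 1"
  using det by (metis of_int_1 of_int_diff of_int_mult)

lemma expX: "exp p * (a*x0+b*x1) = (of_int n00*a+ of_int n10*b)*x0 + (of_int n01*a+ of_int n11*b)*x1"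
proof -
  have "exp p * (a*x0+b*x1) = a*(exp p*x0) + b*(exp p*x1)" by (simp add: algebra_simps)
  also have "\<dots> = a*(of_int n00 * x0 + of_int n01 * x1) + b*(of_int n10 * x0 + of_int n11 * x1)"
    by (simp add: ex0 ex1)
  finally show ?thesis by (simp add: algebra_simps)
qed

lemma expY: "exp (-p) * (a*y0+b*y1) = (of_int n00*a+ of_int n10*b)*y0 + (of_int n01*a+ of_int n11*b)*y1"
proof -
  have "exp (-p) * (a*y0+b*y1) = a*(exp (-p)*y0) + b*(exp (-p)*y1)" by (simp add: algebra_simps)
  also have "\<dots> = a*(of_int n00 * y0 + of_int n01 * y1) + b*(of_int n10 * y0 + of_int n11 * y1)"
    by (simp add: ey0 ey1)
  finally show ?thesis by (simp add: algebra_simps)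
qed

lemma inv_x0: "exp (-p) * x0 = of_int n11 * x0 - of_int n01 * x1"
proof -
  have "exp p * (of_int n11 * x0 - of_int n01 * x1) = of_int n11 * (exp p * x0) - of_int n01 * (exp p * x1)"
    by (simp add: algebra_simps)
  also have "\<dots> = of_int n11 * (of_int n00 * x0 + of_int n01 * x1) - of_int n01 * (of_int n10 * x0 + of_int n11 * x1)"
    by (simp add: ex0 ex1)
  also have "\<dots> = (of_int n00 * of_int n11 - of_int n01 * of_int n10) * x0" by (simp add: algebra_simps)
  finally have "exp p * (of_int n11 * x0 - of_int n01 * x1) = x0" using detr by simp
  then have "exp (-p) * x0 = exp (-p) * exp p * (of_int n11 * x0 - of_int n01 * x1)" by simp
  then show ?thesis by (simp add: exp_minus)
qed

lemma inv_x1: "exp (-p) * x1 = of_int n00 * x1 - of_int n10 * x0"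
proof -
  have "exp p * (of_int n00 * x1 - of_int n10 * x0) = of_int n00 * (exp p * x1) - of_int n10 * (exp p * x0)"
    by (simp add: algebra_simps)
  also have "\<dots> = of_int n00 * (of_int n10 * x0 + of_int n11 * x1) - of_int n10 * (of_int n00 * x0 + of_int n01 * x1)"
    by (simp add: ex0 ex1)
  also have "\<dots> = (of_int n00 * of_int n11 - of_int n01 * of_int n10) * x1" by (simp add: algebra_simps)
  finally have "exp p * (of_int n00 * x1 - of_int n10 * x0) = x1" using detr by simp
  then have "exp (-p) * x1 = exp (-p) * exp p * (of_int n00 * x1 - of_int n10 * x0)" by simp
  then show ?thesis by (simp add: exp_minus)
qed

lemma inv_y0: "exp p * y0 = of_int n11 * y0 - of_int n01 * y1"
proof -
  have "exp (-p) * (of_int n11 * y0 - of_int n01 * y1) = of_int n11 * (exp (-p) * y0) - of_int n01 * (exp (-p) * y1)"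
    by (simp add: algebra_simps)
  also have "\<dots> = of_int n11 * (of_int n00 * y0 + of_int n01 * y1) - of_int n01 * (of_int n10 * y0 + of_int n11 * y1)"
    by (simp add: ey0 ey1)
  also have "\<dots> = (of_int n00 * of_int n11 - of_int n01 * of_int n10) * y0" by (simp add: algebra_simps)
  finally have "exp (-p) * (of_int n11 * y0 - of_int n01 * y1) = y0" using detr by simp
  then have "exp p * y0 = exp p * exp (-p) * (of_int n11 * y0 - of_int n01 * y1)" by simp
  then show ?thesis by (simp add: exp_minus)
qed

lemma inv_y1: "exp p * y1 = of_int n00 * y1 - of_int n10 * y0"
proof -
  have "exp (-p) * (of_int n00 * y1 - of_int n10 * y0) = of_int n00 * (exp (-p) * y1) - of_int n10 * (exp (-p) * y0)"
    by (simp add: algebra_simps)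
  also have "\<dots> = of_int n00 * (of_int n10 * y0 + of_int n11 * y1) - of_int n10 * (of_int n00 * y0 + of_int n01 * y1)"
    by (simp add: ey0 ey1)
  also have "\<dots> = (of_int n00 * of_int n11 - of_int n01 * of_int n10) * y1" by (simp add: algebra_simps)
  finally have "exp (-p) * (of_int n00 * y1 - of_int n10 * y0) = y1" using detr by simp
  then have "exp p * y1 = exp p * exp (-p) * (of_int n00 * y1 - of_int n10 * y0)" by simp
  then show ?thesis by (simp add: exp_minus)
qed

lemma psi_comp: "psi p u (psi p w h) = psi p (u+w) h"
  by (cases h) (simp add: psi_def exp_lem1 exp_lem2 mult.assoc)

lemma psi_1: "P \<in> GN \<Longrightarrow> psi p 1 P \<in> GN"
proof -
  assume "P \<in> GN"
  then obtain a b j where ab: "a \<in> \<int>" "b \<in> \<int>" "j \<in> \<int>"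
    "P = (a*x0+b*x1, a*y0+b*y1, (a*x0+b*x1)*(a*y0+b*y1)/2 + z2/2*j)" by (rule GN_E)
  have e: "exp p * exp (-p) = 1" by (simp add: exp_minus)
  have "(exp p * (a*x0+b*x1)) * (exp (-p) * (a*y0+b*y1)) = (a*x0+b*x1)*(a*y0+b*y1)"
    using e by (metis mult.assoc mult.commute mult.left_neutral)
  then have pr: "((of_int n00*a+ of_int n10*b)*x0 + (of_int n01*a+ of_int n11*b)*x1) *
     ((of_int n00*a+ of_int n10*b)*y0 + (of_int n01*a+ of_int n11*b)*y1) = (a*x0+b*x1)*(a*y0+b*y1)"
    by (simp only: expX expY)
  show ?thesis
    unfolding ab(4) psi_def
    apply (simp only: prod.case mult_1_right)
    apply (rule GN_I[of "of_int n00*a+ of_int n10*b" "of_int n01*a+ of_int n11*b" j])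
    using ab apply simp_all
    apply (simp only: expX)
    apply (simp only: expY)
    using pr e by simp
qed

lemma psi_m1: "P \<in> GN \<Longrightarrow> psi p (-1) P \<in> GN"
proof -
  assume "P \<in> GN"
  then obtain a b j where ab: "a \<in> \<int>" "b \<in> \<int>" "j \<in> \<int>"
    "P = (a*x0+b*x1, a*y0+b*y1, (a*x0+b*x1)*(a*y0+b*y1)/2 + z2/2*j)" by (rule GN_E)
  have e: "exp (-p) * exp p = 1" by (simp add: exp_minus)
  have "(exp (-p) * (a*x0+b*x1)) * (exp p * (a*y0+b*y1)) = (a*x0+b*x1)*(a*y0+b*y1)"
    using e by (metis mult.assoc mult.commute mult.left_neutral)
  moreover have "exp (-p) * (a*x0+b*x1) = (of_int n11*a - of_int n10*b)*x0 + (of_int n00*b - of_int n01*a)*x1"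
  proof -
    have "exp (-p) * (a*x0+b*x1) = a*(exp (-p) * x0) + b*(exp (-p) * x1)" by (simp add: algebra_simps)
    also have "\<dots> = a*(of_int n11 * x0 - of_int n01 * x1) + b*(of_int n00 * x1 - of_int n10 * x0)"
      by (simp only: inv_x0 inv_x1)
    finally show ?thesis by (simp add: algebra_simps)
  qed
  moreover have "exp p * (a*y0+b*y1) = (of_int n11*a - of_int n10*b)*y0 + (of_int n00*b - of_int n01*a)*y1"
  proof -
    have "exp p * (a*y0+b*y1) = a*(exp p * y0) + b*(exp p * y1)" by (simp add: algebra_simps)
    also have "\<dots> = a*(of_int n11 * y0 - of_int n01 * y1) + b*(of_int n00 * y1 - of_int n10 * y0)"
      by (simp only: inv_y0 inv_y1)
    finally show ?thesis by (simp add: algebra_simps)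
  qed
  ultimately show ?thesis
    unfolding ab(4) psi_def
    apply simp
    apply (rule GN_I[of "of_int n11*a - of_int n10*b" "of_int n00*b - of_int n01*a" j])
    using ab by simp_all
qed

lemma psi_0: "psi p 0 h = h"
  by (cases h) (simp add: psi_def)

lemma psi_nat: "P \<in> GN \<Longrightarrow> psi p (of_nat k) P \<in> GN \<and> psi p (-of_nat k) P \<in> GN"
proof (induction k)
  case 0 then show ?case by (simp add: psi_0)
next
  case (Suc k)
  have "psi p (of_nat (Suc k)) P = psi p 1 (psi p (of_nat k) P)" by (simp add: psi_comp add.commute)
  moreover have "psi p (-of_nat (Suc k)) P = psi p (-1) (psi p (-of_nat k) P)" by (simp add: psi_comp add.commute)
  ultimately show ?case using Suc psi_1 psi_m1 by simp
qed

lemma psi_int: "P \<in> GN \<Longrightarrow> psi p (of_int m) P \<in> GN"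
proof (cases m rule: int_cases)
  case (nonneg n) then show "P \<in> GN \<Longrightarrow> ?thesis" using psi_nat[of P n] by simp
next
  case (neg n) then show "P \<in> GN \<Longrightarrow> ?thesis" using psi_nat[of P "Suc n"] by simp
qed

lemma psi_GN: "psi p (of_int m) ` GN = GN"
proof
  show "psi p (of_int m) ` GN \<subseteq> GN" using psi_int by blast
  show "GN \<subseteq> psi p (of_int m) ` GN"
  proof
    fix P assume "P \<in> GN"
    then have "psi p (of_int (-m)) P \<in> GN" by (rule psi_int)
    moreover have "P = psi p (of_int m) (psi p (of_int (-m)) P)" by (simp add: psi_comp psi_0)
    ultimately show "P \<in> psi p (of_int m) ` GN" by blast
  qed
qed

lemma GN_mult: "P \<in> GN \<Longrightarrow> Q \<in> GN \<Longrightarrow> heis_mult P Q \<in> GN"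
  using subgroup.m_closed[OF GN_sub] by (simp add: Heis_def)

lemma GN_inv: "(x,y,z) \<in> GN \<Longrightarrow> (-x,-y,x*y-z) \<in> GN"
  using subgroup.m_inv_closed[OF GN_sub] Heis_inv by metis

lemma GN_shift: "(x,y,z) \<in> GN \<Longrightarrow> n \<in> \<int> \<Longrightarrow> (x,y,z + z2*n) \<in> GN"
proof -
  assume "(x,y,z) \<in> GN" "n \<in> \<int>"
  from \<open>(x,y,z) \<in> GN\<close> obtain a b j where ab: "a \<in> \<int>" "b \<in> \<int>" "j \<in> \<int>"
    "(x,y,z) = (a*x0+b*x1, a*y0+b*y1, (a*x0+b*x1)*(a*y0+b*y1)/2 + z2/2*j)" by (rule GN_E)
  show ?thesis
    apply (rule GN_I[of a b "j + 2*n"])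
    using ab \<open>n \<in> \<int>\<close> by (auto simp: algebra_simps)
qed

abbreviation "GS \<equiv> semidir_Z GN"
abbreviation "GG \<equiv> semidir_cZ z2 GS"

lemma GS_sub: "subgroup GS (S_grp p)"
proof (rule group.subgroupI[OF S_group])
  show "GS \<subseteq> carrier (S_grp p)" by (simp add: S_grp_def)
  have "(0,0,0) \<in> GN" using GN_I[of 0 0 0] by auto
  then show "GS \<noteq> {}" unfolding semidir_Z_def by auto
next
  fix P assume P: "P \<in> GS"
  obtain x y z u where Pe: "P = (x,y,z,u)" by (cases P) auto
  have h: "(x,y,z) \<in> GN" "u \<in> \<int>" using P Pe by (auto simp: semidir_Z_def)
  then obtain m where m: "u = of_int m" by (auto elim: Ints_cases)
  have "psi p (of_int (-m)) (-x,-y,x*y-z) \<in> GN" using psi_int GN_inv h by blast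
  then show "inv\<^bsub>S_grp p\<^esub> P \<in> GS"
    unfolding Pe S_inv semidir_Z_def using m by (simp add: psi_def)
next
  fix P Q assume P: "P \<in> GS" and Q: "Q \<in> GS"
  obtain x y z u where Pe: "P = (x,y,z,u)" by (cases P) auto
  obtain x' y' z' u' where Qe: "Q = (x',y',z',u')" by (cases Q) auto
  have h: "(x,y,z) \<in> GN" "u \<in> \<int>" "(x',y',z') \<in> GN" "u' \<in> \<int>"
    using P Pe Q Qe by (auto simp: semidir_Z_def)
  then obtain m where m: "u = of_int m" by (auto elim: Ints_cases)
  have "heis_mult (x,y,z) (psi p (of_int m) (x',y',z')) \<in> GN" using psi_int GN_mult h by blast
  then show "P \<otimes>\<^bsub>S_grp p\<^esub> Q \<in> GS"
    unfolding Pe Qe semidir_Z_def using m h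
    by (simp add: S_grp_def S_mult_def heis_mult_def psi_def mult.assoc)
qed

lemma phi_GS: "phi (z2 * of_int k) ` GS = GS"
proof -
  have A: "phi (z2 * of_int k) P \<in> GS" if "P \<in> GS" for P k
  proof -
    obtain x y z u where Pe: "P = (x,y,z,u)" by (cases P) auto
    have h: "(x,y,z) \<in> GN" "u \<in> \<int>" using that Pe by (auto simp: semidir_Z_def)
    have "(x,y,z + z2 * (of_int k * u)) \<in> GN" using GN_shift h by auto
    then show ?thesis unfolding Pe phi_def semidir_Z_def using h by (simp add: algebra_simps)
  qed
  show ?thesis
  proof
    show "phi (z2 * of_int k) ` GS \<subseteq> GS" using A by blast
    show "GS \<subseteq> phi (z2 * of_int k) ` GS"
    proof
      fix P assume "P \<in> GS"
      then have "phi (z2 * of_int (-k)) P \<in> GS" by (rule A)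
      moreover have "P = phi (z2 * of_int k) (phi (z2 * of_int (-k)) P)"
        by (cases P) (simp add: phi_def algebra_simps)
      ultimately show "P \<in> phi (z2 * of_int k) ` GS" by blast
    qed
  qed
qed

lemma GS_shift: "(x,y,z,u) \<in> GS \<Longrightarrow> n \<in> \<int> \<Longrightarrow> (x,y,z + z2*n,u) \<in> GS"
  using GN_shift unfolding semidir_Z_def by auto

lemma GG_sub: "subgroup GG (G_grp p)"
proof (rule group.subgroupI[OF G_group])
  show "GG \<subseteq> carrier (G_grp p)" by (simp add: G_grp_def)
  have "(0,0,0) \<in> GN" using GN_I[of 0 0 0] by auto
  then have "(0,0,0,0,0) \<in> GG" unfolding semidir_Z_def semidir_cZ_def by (auto intro: exI[of _ 0])
  then show "GG \<noteq> {}" by auto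
next
  fix P assume P: "P \<in> GG"
  obtain x y z u t where Pe: "P = (x,y,z,u,t)" by (cases P) auto
  obtain k where h: "(x,y,z,u) \<in> GS" "t = z2 * of_int k" using P Pe by (auto simp: semidir_cZ_def)
  have u: "u \<in> \<int>" using h by (simp add: semidir_Z_def)
  have "inv\<^bsub>S_grp p\<^esub> (x,y,z,u) \<in> GS" using subgroup.m_inv_closed[OF GS_sub] h by blast
  then have "(-exp(-(p*u))*x, -exp(p*u)*y, x*y - z + z2 * (of_int k * u), -u) \<in> GS"
    using GS_shift[of _ _ _ _ "of_int k * u"] u by (simp add: S_inv)
  then show "inv\<^bsub>G_grp p\<^esub> P \<in> GG"
    unfolding Pe G_inv semidir_cZ_def using h
    by (auto simp: algebra_simps intro!: exI[of _ "-k"])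
next
  fix P Q assume P: "P \<in> GG" and Q: "Q \<in> GG"
  obtain x y z u t where Pe: "P = (x,y,z,u,t)" by (cases P) auto
  obtain x' y' z' u' t' where Qe: "Q = (x',y',z',u',t')" by (cases Q) auto
  obtain k where h: "(x,y,z,u) \<in> GS" "t = z2 * of_int k" using P Pe by (auto simp: semidir_cZ_def)
  obtain k' where h': "(x',y',z',u') \<in> GS" "t' = z2 * of_int k'" using Q Qe by (auto simp: semidir_cZ_def)
  have u': "u' \<in> \<int>" using h' by (simp add: semidir_Z_def)
  have "(x',y',z' + z2 * (of_int k * u'),u') \<in> GS" using GS_shift h' u' by auto
  then have "S_mult p (x,y,z,u) (x',y',z' + z2 * (of_int k * u'),u') \<in> GS"
    using subgroup.m_closed[OF GS_sub] h by (simp add: S_grp_def)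
  then show "P \<otimes>\<^bsub>G_grp p\<^esub> Q \<in> GG"
    unfolding Pe Qe semidir_cZ_def using h h'
    by (auto simp: G_grp_def G_mult_def S_mult_def algebra_simps intro!: exI[of _ "k+k'"])
qed

lemma int_close: "a \<in> \<int> \<Longrightarrow> b \<in> \<int> \<Longrightarrow> \<bar>a - b\<bar> < 1 \<Longrightarrow> a = (b::real)"
  using Ints_eq_abs_less1 by blast

lemma coef_close:
  fixes d e dX dY c1 c2 :: real
  assumes "d * D = dX * c1 - dY * c2" "\<bar>dX\<bar> < e" "\<bar>dY\<bar> < e" "e > 0"
    "e * (\<bar>c1\<bar> + \<bar>c2\<bar> + 1) \<le> \<bar>D\<bar>" "D \<noteq> 0"
  shows "\<bar>d\<bar> < 1"
proof -
  have "\<bar>d\<bar> * \<bar>D\<bar> = \<bar>dX * c1 - dY * c2\<bar>" using assms(1) by (metis abs_mult)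
  also have "\<dots> \<le> \<bar>dX\<bar> * \<bar>c1\<bar> + \<bar>dY\<bar> * \<bar>c2\<bar>" by (simp add: abs_triangle_ineq4[THEN order_trans] abs_mult)
  also have "\<dots> \<le> e * \<bar>c1\<bar> + e * \<bar>c2\<bar>"
    using assms(2,3) by (intro add_mono mult_right_mono) auto
  also have "\<dots> < e * (\<bar>c1\<bar> + \<bar>c2\<bar> + 1)" using assms(4) by (simp add: algebra_simps)
  also have "\<dots> \<le> 1 * \<bar>D\<bar>" using assms(5) by simp
  finally have "\<bar>d\<bar> * \<bar>D\<bar> < 1 * \<bar>D\<bar>" .
  then show ?thesis using assms(6) by (simp add: mult_less_cancel_right2)
qed

end

lemma dpair: "dist a c \<le> dist (a,b) (c,d)" "dist b d \<le> dist (a,b) (c,d)"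
  using dist_fst_le[of "(a,b)" "(c,d)"] dist_snd_le[of "(a,b)" "(c,d)"] by auto

lemma d3: "dist x x' \<le> dist (x,y,z) (x',y',z')" "dist y y' \<le> dist (x,y,z) (x',y',z')"
  "dist z z' \<le> dist (x,y,z) (x',y',z')"
  by (rule dpair(1)) (rule order_trans[OF dpair(1) dpair(2)], rule order_trans[OF dpair(2) dpair(2)])

lemma d4: "dist x x' \<le> dist (x,y,z,u) (x',y',z',u')" "dist y y' \<le> dist (x,y,z,u) (x',y',z',u')"
  "dist z z' \<le> dist (x,y,z,u) (x',y',z',u')" "dist u u' \<le> dist (x,y,z,u) (x',y',z',u')"
  by (rule dpair(1)) (rule order_trans[OF d3(1) dpair(2)], rule order_trans[OF d3(2) dpair(2)],
    rule order_trans[OF d3(3) dpair(2)])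

lemma d5: "dist x x' \<le> dist (x,y,z,u,t) (x',y',z',u',t')" "dist y y' \<le> dist (x,y,z,u,t) (x',y',z',u',t')"
  "dist z z' \<le> dist (x,y,z,u,t) (x',y',z',u',t')" "dist u u' \<le> dist (x,y,z,u,t) (x',y',z',u',t')"
  "dist t t' \<le> dist (x,y,z,u,t) (x',y',z',u',t')"
  by (rule dpair(1)) (rule order_trans[OF d4(1) dpair(2)], rule order_trans[OF d4(2) dpair(2)],
    rule order_trans[OF d4(3) dpair(2)], rule order_trans[OF d4(4) dpair(2)])

context lat begin
definition "M0 = \<bar>x0\<bar> + \<bar>x1\<bar> + \<bar>y0\<bar> + \<bar>y1\<bar> + 1"
definition "del = min (\<bar>z2\<bar> / M0) (\<bar>z2\<bar> / 2)"

lemma M0_pos: "M0 > 0" unfolding M0_def by simp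
lemma del_pos: "del > 0" unfolding del_def using z2nz M0_pos by simp

lemma GN_sep:
  assumes "(x,y,z) \<in> GN" "(x',y',z') \<in> GN" "\<bar>x - x'\<bar> < del" "\<bar>y - y'\<bar> < del" "\<bar>z - z'\<bar> < del"
  shows "(x,y,z) = (x',y',z')"
proof -
  obtain a b j where ab: "a \<in> \<int>" "b \<in> \<int>" "j \<in> \<int>"
    "(x,y,z) = (a*x0+b*x1, a*y0+b*y1, (a*x0+b*x1)*(a*y0+b*y1)/2 + z2/2*j)" using assms(1) by (rule GN_E)
  obtain a' b' j' where ab': "a' \<in> \<int>" "b' \<in> \<int>" "j' \<in> \<int>"
    "(x',y',z') = (a'*x0+b'*x1, a'*y0+b'*y1, (a'*x0+b'*x1)*(a'*y0+b'*y1)/2 + z2/2*j')" using assms(2) by (rule GN_E)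
  have D: "x0*y1 - x1*y0 \<noteq> 0" using z2nz z2 by simp
  have Dz: "\<bar>x0*y1 - x1*y0\<bar> = \<bar>z2\<bar>" using z2 by simp
  have dle1: "del \<le> \<bar>z2\<bar> / M0" unfolding del_def by (rule min.cobounded1)
  have dle2: "del \<le> \<bar>z2\<bar> / 2" unfolding del_def by (rule min.cobounded2)
  note dle = dle1 dle2
  have e1: "del * (\<bar>y1\<bar> + \<bar>x1\<bar> + 1) \<le> \<bar>x0*y1 - x1*y0\<bar>"
  proof -
    have "del * (\<bar>y1\<bar> + \<bar>x1\<bar> + 1) \<le> del * M0"
      using del_pos unfolding M0_def by (intro mult_left_mono) auto
    also have "\<dots> \<le> \<bar>z2\<bar>" using dle M0_pos by (simp add: pos_le_divide_eq)
    finally show ?thesis using Dz by simp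
  qed
  have e2: "del * (\<bar>x0\<bar> + \<bar>y0\<bar> + 1) \<le> \<bar>x0*y1 - x1*y0\<bar>"
  proof -
    have "del * (\<bar>x0\<bar> + \<bar>y0\<bar> + 1) \<le> del * M0"
      using del_pos unfolding M0_def by (intro mult_left_mono) auto
    also have "\<dots> \<le> \<bar>z2\<bar>" using dle M0_pos by (simp add: pos_le_divide_eq)
    finally show ?thesis using Dz by simp
  qed
  have xe: "x = a*x0+b*x1" "y = a*y0+b*y1" "x' = a'*x0+b'*x1" "y' = a'*y0+b'*y1"
    using ab(4) ab'(4) by auto
  have "(a - a') * (x0*y1 - x1*y0) = (x - x') * y1 - (y - y') * x1"
    unfolding xe by (simp add: algebra_simps)
  then have "\<bar>a - a'\<bar> < 1" using coef_close[OF _ assms(3) assms(4) del_pos e1 D] by blast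
  then have aa: "a = a'" using int_close ab ab' by blast
  have "(b - b') * (x0*y1 - x1*y0) = (y - y') * x0 - (x - x') * y0"
    unfolding xe by (simp add: algebra_simps)
  then have "\<bar>b - b'\<bar> < 1" using coef_close[OF _ assms(4) assms(3) del_pos e2 D] by blast
  then have bb: "b = b'" using int_close ab ab' by blast
  have "z - z' = z2/2 * (j - j')" using ab(4) ab'(4) aa bb by (simp add: algebra_simps)
  then have "\<bar>z2/2\<bar> * \<bar>j - j'\<bar> < \<bar>z2\<bar>/2" using assms(5) dle by (simp add: abs_mult)
  then have "\<bar>j - j'\<bar> < 1" using z2nz by (simp add: field_simps)
  then have "j = j'" using int_close ab ab' by blast
  then show ?thesis using ab(4) ab'(4) aa bb by simp
qed

lemma GN_disc: "discrete GN"
proof (rule uniform_discrete_imp_discrete, rule uniformI1[OF del_pos])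
  fix P Q assume PQ: "P \<in> GN" "Q \<in> GN" "dist P Q < del"
  obtain x y z where Pe: "P = (x,y,z)" by (cases P) auto
  obtain x' y' z' where Qe: "Q = (x',y',z')" by (cases Q) auto
  have "dist x x' \<le> dist P Q" "dist y y' \<le> dist P Q" "dist z z' \<le> dist P Q"
    unfolding Pe Qe by (rule d3)+
  then show "P = Q" using GN_sep PQ unfolding Pe Qe by (simp add: dist_real_def)
qed

lemma GS_disc: "discrete GS"
proof (rule uniform_discrete_imp_discrete, rule uniformI1[of "min del 1"])
  show "min del 1 > 0" using del_pos by simp
  fix P Q assume PQ: "P \<in> GS" "Q \<in> GS" "dist P Q < min del 1"
  obtain x y z u where Pe: "P = (x,y,z,u)" by (cases P) auto
  obtain x' y' z' u' where Qe: "Q = (x',y',z',u')" by (cases Q) auto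
  have "dist x x' \<le> dist P Q" "dist y y' \<le> dist P Q" "dist z z' \<le> dist P Q" "dist u u' \<le> dist P Q"
    unfolding Pe Qe by (rule d4)+
  then have c: "\<bar>x - x'\<bar> < del" "\<bar>y - y'\<bar> < del" "\<bar>z - z'\<bar> < del" "\<bar>u - u'\<bar> < 1"
    using PQ(3) by (auto simp: dist_real_def)
  have m: "(x,y,z) \<in> GN" "(x',y',z') \<in> GN" "u \<in> \<int>" "u' \<in> \<int>"
    using PQ unfolding Pe Qe semidir_Z_def by auto
  show "P = Q" using GN_sep[OF m(1,2) c(1-3)] int_close[OF m(3,4) c(4)] unfolding Pe Qe by simp
qed

lemma GG_disc: "discrete GG"
proof (rule uniform_discrete_imp_discrete, rule uniformI1[of "min del (min 1 \<bar>z2\<bar>)"])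
  show "min del (min 1 \<bar>z2\<bar>) > 0" using del_pos z2nz by simp
  fix P Q assume PQ: "P \<in> GG" "Q \<in> GG" "dist P Q < min del (min 1 \<bar>z2\<bar>)"
  obtain x y z u t where Pe: "P = (x,y,z,u,t)" by (cases P) auto
  obtain x' y' z' u' t' where Qe: "Q = (x',y',z',u',t')" by (cases Q) auto
  have "dist x x' \<le> dist P Q" "dist y y' \<le> dist P Q" "dist z z' \<le> dist P Q" "dist u u' \<le> dist P Q"
     "dist t t' \<le> dist P Q"
    unfolding Pe Qe by (rule d5)+
  then have c: "\<bar>x - x'\<bar> < del" "\<bar>y - y'\<bar> < del" "\<bar>z - z'\<bar> < del" "\<bar>u - u'\<bar> < 1"
    "\<bar>t - t'\<bar> < \<bar>z2\<bar>"
    using PQ(3) by (auto simp: dist_real_def)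
  obtain k k' where m: "(x,y,z) \<in> GN" "(x',y',z') \<in> GN" "u \<in> \<int>" "u' \<in> \<int>"
    "t = z2 * of_int k" "t' = z2 * of_int k'"
    using PQ unfolding Pe Qe semidir_Z_def semidir_cZ_def by auto
  have "\<bar>z2\<bar> * \<bar>of_int k - of_int k'\<bar> < \<bar>z2\<bar> * 1"
    using c(5) m(5,6) by (simp add: abs_mult[symmetric] algebra_simps)
  then have "\<bar>real_of_int k - of_int k'\<bar> < 1" using z2nz by simp
  then have "real_of_int k = of_int k'" using int_close[of "of_int k" "of_int k'"] by simp
  then have "t = t'" using m(5,6) by simp
  then show "P = Q" using GN_sep[OF m(1,2) c(1-3)] int_close[OF m(3,4) c(4)] unfolding Pe Qe by simp
qed

definition KH :: "(real \<times> real \<times> real) set" where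
  "KH = (\<lambda>q. (fst q * x0 + fst (snd q) * x1, fst q * y0 + fst (snd q) * y1, z2 * snd (snd q))) `
        ({0..1} \<times> {0..1} \<times> {0..1})"

lemma KH_compact: "compact KH"
  unfolding KH_def
  by (intro compact_continuous_image compact_Times compact_Icc continuous_intros)

lemma frac_bounds: "(r::real) - of_int \<lfloor>r\<rfloor> \<in> {0..1}"
  using frac_lt_1[of r] frac_ge_0[of r] by (simp add: frac_def)

lemma H_dec: "\<exists>k\<in>KH. \<exists>h\<in>GN. g = heis_mult k h"
proof -
  obtain x y z where g: "g = (x,y,z)" by (cases g) auto
  define D where "D = x0*y1 - x1*y0"
  have D: "D \<noteq> 0" using z2nz z2 unfolding D_def by simp
  define \<alpha> where "\<alpha> = (x*y1 - y*x1)/D"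
  define \<beta> where "\<beta> = (y*x0 - x*y0)/D"
  have "\<alpha>*x0 + \<beta>*x1 = ((x*y1 - y*x1)*x0 + (y*x0 - x*y0)*x1)/D"
    unfolding \<alpha>_def \<beta>_def by (simp add: add_divide_distrib)
  also have "\<dots> = (x*D)/D"
    by (rule arg_cong[where f="\<lambda>n. n/D"]) (simp add: D_def algebra_simps)
  finally have ax: "\<alpha>*x0 + \<beta>*x1 = x" using D by simp
  have "\<alpha>*y0 + \<beta>*y1 = ((x*y1 - y*x1)*y0 + (y*x0 - x*y0)*y1)/D"
    unfolding \<alpha>_def \<beta>_def by (simp add: add_divide_distrib)
  also have "\<dots> = (y*D)/D"
    by (rule arg_cong[where f="\<lambda>n. n/D"]) (simp add: D_def algebra_simps)
  finally have ay: "\<alpha>*y0 + \<beta>*y1 = y" using D by simp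
  define a where "a = real_of_int \<lfloor>\<alpha>\<rfloor>"
  define b where "b = real_of_int \<lfloor>\<beta>\<rfloor>"
  define s where "s = \<alpha> - a"
  define t where "t = \<beta> - b"
  define X where "X = a*x0 + b*x1"
  define Y where "Y = a*y0 + b*y1"
  define kx where "kx = s*x0 + t*x1"
  define ky where "ky = s*y0 + t*y1"
  define w where "w = z - X*Y/2 - kx*Y"
  define j where "j = real_of_int \<lfloor>w/z2\<rfloor>"
  define r where "r = w/z2 - j"
  have s01: "s \<in> {0..1}" unfolding s_def a_def by (rule frac_bounds)
  have t01: "t \<in> {0..1}" unfolding t_def b_def by (rule frac_bounds)
  have r01: "r \<in> {0..1}" unfolding r_def j_def by (rule frac_bounds)
  have kK: "(kx, ky, z2*r) \<in> KH" unfolding KH_def kx_def ky_def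
    using s01 t01 r01 by (auto intro!: image_eqI[of _ _ "(s,t,r)"])
  have hG: "(X, Y, X*Y/2 + z2/2*(2*j)) \<in> GN"
    by (rule GN_I[of a b "2*j"]) (auto simp: a_def b_def j_def X_def Y_def)
  have e1: "kx + X = x" unfolding kx_def X_def s_def t_def using ax by (simp add: algebra_simps)
  have e2: "ky + Y = y" unfolding ky_def Y_def s_def t_def using ay by (simp add: algebra_simps)
  have e3: "z2*r + (X*Y/2 + z2/2*(2*j)) + kx*Y = z"
    unfolding r_def using z2nz by (simp add: field_simps w_def)
  have "heis_mult (kx, ky, z2*r) (X, Y, X*Y/2 + z2/2*(2*j)) = (x,y,z)"
    by (simp only: heis_mult_def prod.case e1 e2 e3)
  then show ?thesis using kK hG g by metis
qed

lemma Heis_cocompact: "cocompact_discrete_subgroup Heis GN"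
  by (rule cocompact_from_domain[OF Heis_group _ GN_sub GN_disc KH_compact])
     (auto simp: Heis_def H_dec)

definition KS :: "(real \<times> real \<times> real \<times> real) set" where
  "KS = (\<lambda>q. (exp (p * fst q) * fst (snd q), exp (-(p * fst q)) * fst (snd (snd q)), snd (snd (snd q)), fst q)) `
        ({0..1} \<times> KH)"

lemma KS_compact: "compact KS"
  unfolding KS_def
  by (intro compact_continuous_image compact_Times compact_Icc KH_compact continuous_intros)

lemma S_dec: "\<exists>k\<in>KS. \<exists>h\<in>GS. g = S_mult p k h"
proof -
  obtain x y z u where g: "g = (x,y,z,u)" by (cases g) auto
  define n where "n = real_of_int \<lfloor>u\<rfloor>"
  define c where "c = u - n"
  have c01: "c \<in> {0..1}" unfolding c_def n_def by (rule frac_bounds)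
  obtain k h where kh: "k \<in> KH" "h \<in> GN" "(exp (-(p*c)) * x, exp (p*c) * y, z) = heis_mult k h"
    using H_dec by blast
  obtain kx ky kz where k: "k = (kx,ky,kz)" by (cases k) auto
  obtain hx hy hz where h: "h = (hx,hy,hz)" by (cases h) auto
  have eq: "exp (-(p*c)) * x = kx + hx" "exp (p*c) * y = ky + hy" "z = kz + hz + kx * hy"
    using kh(3) unfolding k h heis_mult_def by auto
  have e: "exp (p*c) * exp (-(p*c)) = 1" by (rule exp_lem3)
  have kK: "(exp (p*c) * kx, exp (-(p*c)) * ky, kz, c) \<in> KS"
    unfolding KS_def using c01 kh(1) k by (auto intro!: image_eqI[of _ _ "(c,kx,ky,kz)"])
  have hG: "(hx,hy,hz,n) \<in> GS" using kh(2) h unfolding semidir_Z_def n_def by auto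
  have ex: "exp (p*c) * kx + exp (p*c) * hx = x"
  proof -
    have "exp (p*c) * kx + exp (p*c) * hx = exp (p*c) * (kx + hx)" by (simp only: distrib_left)
    also have "\<dots> = exp (p*c) * (exp (-(p*c)) * x)" by (simp only: eq(1))
    also have "\<dots> = (exp (p*c) * exp (-(p*c))) * x" by (simp only: mult.assoc)
    also have "\<dots> = x" by (simp only: e mult_1_left)
    finally show ?thesis .
  qed
  have ey: "exp (-(p*c)) * ky + exp (-(p*c)) * hy = y"
  proof -
    have "exp (-(p*c)) * ky + exp (-(p*c)) * hy = exp (-(p*c)) * (ky + hy)" by (simp only: distrib_left)
    also have "\<dots> = exp (-(p*c)) * (exp (p*c) * y)" by (simp only: eq(2))
    also have "\<dots> = (exp (p*c) * exp (-(p*c))) * y" by (simp only: ac_simps)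
    also have "\<dots> = y" by (simp only: e mult_1_left)
    finally show ?thesis .
  qed
  have ez: "kz + hz + exp (p*c) * kx * exp (-(p*c)) * hy = z"
  proof -
    have "exp (p*c) * kx * exp (-(p*c)) * hy = (exp (p*c) * exp (-(p*c))) * (kx * hy)" by (simp only: ac_simps)
    then have "exp (p*c) * kx * exp (-(p*c)) * hy = kx * hy" by (simp only: e mult_1_left)
    then show ?thesis using eq(3) by simp
  qed
  have eu: "c + n = u" unfolding c_def by simp
  have "S_mult p (exp (p*c) * kx, exp (-(p*c)) * ky, kz, c) (hx,hy,hz,n) = (x,y,z,u)"
    unfolding S_mult_def prod.case distrib_left[symmetric] ex ey ez eu
    by (simp only: distrib_left ex ey ez eu)
  then show ?thesis using kK hG g by metis
qed

lemma S_cocompact: "cocompact_discrete_subgroup (S_grp p) GS"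
  by (rule cocompact_from_domain[OF S_group _ GS_sub GS_disc KS_compact])
     (auto simp: S_grp_def S_dec)

definition KG :: "(real \<times> real \<times> real \<times> real \<times> real) set" where
  "KG = (\<lambda>q. (fst (snd q), fst (snd (snd q)), fst (snd (snd (snd q))) + z2 * fst q * snd (snd (snd (snd q))),
              snd (snd (snd (snd q))), z2 * fst q)) ` ({0..1} \<times> KS)"

lemma KG_compact: "compact KG"
  unfolding KG_def
  by (intro compact_continuous_image compact_Times compact_Icc KS_compact continuous_intros)

lemma G_dec: "\<exists>k\<in>KG. \<exists>h\<in>GG. g = G_mult p k h"
proof -
  obtain x y z u t where g: "g = (x,y,z,u,t)" by (cases g) auto
  define m where "m = \<lfloor>t/z2\<rfloor>"
  define d where "d = t/z2 - of_int m"
  have d01: "d \<in> {0..1}" unfolding d_def m_def by (rule frac_bounds)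
  obtain k h where kh: "k \<in> KS" "h \<in> GS" "(x, y, z - z2*d*u, u) = S_mult p k h"
    using S_dec by blast
  obtain kx ky kz ku where k: "k = (kx,ky,kz,ku)" by (cases k) auto
  obtain hx hy hz hu where h: "h = (hx,hy,hz,hu)" by (cases h) auto
  have eq: "x = kx + exp (p*ku) * hx" "y = ky + exp (-(p*ku)) * hy"
     "z - z2*d*u = kz + hz + kx * exp (-(p*ku)) * hy" "u = ku + hu"
    using kh(3) unfolding k h S_mult_def by auto
  have kK: "(kx, ky, kz + z2*d*ku, ku, z2*d) \<in> KG"
    unfolding KG_def using d01 kh(1) k by (auto intro!: image_eqI[of _ _ "(d,kx,ky,kz,ku)"])
  have hG: "(hx,hy,hz,hu,z2 * of_int m) \<in> GG" using kh(2) h unfolding semidir_cZ_def by auto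
  have et: "z2*d + z2 * of_int m = t" unfolding d_def using z2nz by (simp add: field_simps)
  have zz: "z = z2*d*(ku+hu) + (kz + hz + kx * exp (-(p*ku)) * hy)"
    using eq(3) eq(4) by (metis diff_eq_eq add.commute)
  have ez: "kz + z2*d*ku + hz + kx * exp (-(p*ku)) * hy + z2*d*hu = z"
    by (simp only: zz) (simp add: algebra_simps)
  have "G_mult p (kx, ky, kz + z2*d*ku, ku, z2*d) (hx,hy,hz,hu,z2 * of_int m) = (x,y,z,u,t)"
    unfolding G_mult_def prod.case
    by (simp only: eq(1,2) eq(4)[symmetric] ez et)
  then show ?thesis using kK hG g by metis
qed

lemma G_cocompact: "cocompact_discrete_subgroup (G_grp p) GG"
  by (rule cocompact_from_domain[OF G_group _ GG_sub GG_disc KG_compact])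
     (auto simp: G_grp_def G_dec)

end

theorem proposition2p2:
  fixes p :: real and n00 n01 n10 n11 :: int and x0 x1 y0 y1 z2 :: real
  assumes "p \<noteq> 0"
    and "n00 * n11 - n01 * n10 = 1"
    and "(x0, x1) \<noteq> (0, 0)"
    and "of_int n00 * x0 + of_int n01 * x1 = exp p * x0"
    and "of_int n10 * x0 + of_int n11 * x1 = exp p * x1"
    and "(y0, y1) \<noteq> (0, 0)"
    and "of_int n00 * y0 + of_int n01 * y1 = exp (-p) * y0"
    and "of_int n10 * y0 + of_int n11 * y1 = exp (-p) * y1"
    and "z2 = x1 * y0 - x0 * y1"
  shows "\<exists>\<Gamma>N :: (real \<times> real \<times> real) set.
           cocompact_discrete_subgroup Heis \<Gamma>N
         \<and> (\<forall>m::int. psi p (of_int m) ` \<Gamma>N = \<Gamma>N)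
         \<and> cocompact_discrete_subgroup (S_grp p) (semidir_Z \<Gamma>N)
         \<and> (\<forall>k::int. phi (z2 * of_int k) ` semidir_Z \<Gamma>N = semidir_Z \<Gamma>N)
         \<and> cocompact_discrete_subgroup (G_grp p) (semidir_cZ z2 (semidir_Z \<Gamma>N))"
  proof -
  interpret lat p n00 n01 n10 n11 x0 x1 y0 y1 z2 using assms by unfold_locales
  show ?thesis using Heis_cocompact psi_GN S_cocompact phi_GS G_cocompact by blast
qed

end
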